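(* Let $k\ge 2$ be an integer, let $N\ge 2k-1$ be an integer, and let $\tau\colon\{0,1\}^*\to\{0,1,\#\}^*$ be the $N$-uniform substitution defined by $\tau(0)=\#0^{k-2}0^{N-2k+2}0^{k-1}$ and $\tau(1)=\#0^{k-2}1^{N-2k+2}0^{k-1}$. Let $\mathbf{w}$ be an infinite binary word. If $u_0\cdots u_{e-1}$ with $e\ge N$ is a $k$-abelian power occurring in $\tau(\mathbf{w})$, then $N$ divides $|u_0|$.
   Context: For finite words $u,x$, $|u|_x$ denotes the number of occurrences of $x$ as a factor of $u$. Two finite words $u,v$ are $k$-abelian equivalent, written $u\sim_k v$, if $|u|_x=|v|_x$ for every nonempty word $x$ of length at most $k$. A $k$-abelian power of exponent $e$ (a positive integer) and period $m$ is a nonempty word $u_0\cdots u_{e-1}$ with $|u_0|=m$ and $u_0\sim_k\cdots\sim_k u_{e-1}$. The image $\tau(\mathbf{w})$ of an infinite word is obtained by applying $\tau$ letter by letter. *)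

theory Defs
  imports Main
begin

datatype sym = Zero | One | Hash

definition occ :: "'a list \<Rightarrow> 'a list \<Rightarrow> nat" where
  "occ u x = card {i. i + length x \<le> length u \<and> take (length x) (drop i u) = x}"

definition k_abelian_eq :: "nat \<Rightarrow> 'a list \<Rightarrow> 'a list \<Rightarrow> bool" where
  "k_abelian_eq k u v \<longleftrightarrow> (\<forall>x. x \<noteq> [] \<and> length x \<le> k \<longrightarrow> occ u x = occ v x)"

definition k_abelian_power :: "nat \<Rightarrow> nat \<Rightarrow> nat \<Rightarrow> 'a list \<Rightarrow> bool" where
  "k_abelian_power k e m v \<longleftrightarrow> e > 0 \<and> v \<noteq> [] \<and>
     (\<exists>us. length us = e \<and> concat us = v \<and> length (us ! 0) = m \<and>
        (\<forall>i<e. \<forall>j<e. k_abelian_eq k (us ! i) (us ! j)))"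

text \<open>The N-uniform substitution; binary letters: False = 0, True = 1.\<close>
definition tau :: "nat \<Rightarrow> nat \<Rightarrow> bool \<Rightarrow> sym list" where
  "tau k N b = [Hash] @ replicate (k - 2) Zero @ replicate (N - 2 * k + 2) (if b then One else Zero)
               @ replicate (k - 1) Zero"

text \<open>Image of an infinite binary word (valid when every image has length N).\<close>
definition tau_word :: "nat \<Rightarrow> nat \<Rightarrow> (nat \<Rightarrow> bool) \<Rightarrow> nat \<Rightarrow> sym" where
  "tau_word k N w n = tau k N (w (n div N)) ! (n mod N)"

definition occurs_in :: "'a list \<Rightarrow> (nat \<Rightarrow> 'a) \<Rightarrow> bool" where
  "occurs_in v s \<longleftrightarrow> (\<exists>i. \<forall>j<length v. v ! j = s (i + j))"

end

theory Submission
  imports Defs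
begin

definition cnt :: "sym \<Rightarrow> sym list \<Rightarrow> nat" where
  "cnt x u = length (filter ((=) x) u)"

lemma occ_single: "occ u [x] = cnt x u"
proof -
  have "{i. i + length [x] \<le> length u \<and> take (length [x]) (drop i u) = [x]}
        = {i. i < length u \<and> x = u ! i}"
  proof (intro set_eqI iffI)
    fix i assume "i \<in> {i. i + length [x] \<le> length u \<and> take (length [x]) (drop i u) = [x]}"
    then show "i \<in> {i. i < length u \<and> x = u ! i}"
      by (auto simp: take_Suc_conv_app_nth)
  next
    fix i assume "i \<in> {i. i < length u \<and> x = u ! i}"
    then show "i \<in> {i. i + length [x] \<le> length u \<and> take (length [x]) (drop i u) = [x]}"
      by (auto simp: take_Suc_conv_app_nth)
  qed
  then show ?thesis unfolding occ_def cnt_def by (simp add: length_filter_conv_card)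
qed

lemma length_cnt: "length u = cnt Zero u + cnt One u + cnt Hash u"
  unfolding cnt_def
proof (induction u)
  case (Cons a u) then show ?case by (cases a) auto
qed simp

lemma kab_len:
  assumes "k \<ge> 1" "k_abelian_eq k u v"
  shows "length u = length v" "cnt Hash u = cnt Hash v"
proof -
  have "\<And>x. occ u [x] = occ v [x]" using assms unfolding k_abelian_eq_def by auto
  hence h: "\<And>x. cnt x u = cnt x v" by (simp add: occ_single)
  show "length u = length v" using h by (simp add: length_cnt[of u] length_cnt[of v])
  show "cnt Hash u = cnt Hash v" using h by simp
qed

lemma tau_hash:
  assumes "j < N" "k \<ge> 2" "N \<ge> 2 * k - 1"
  shows "(tau k N b ! j = Hash) \<longleftrightarrow> j = 0"
proof (cases j)
  case 0 then show ?thesis by (simp add: tau_def)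
next
  case (Suc j')
  let ?r = "replicate (k - 2) Zero @ replicate (N - 2 * k + 2) (if b then One else Zero)
               @ replicate (k - 1) Zero"
  have "length ?r = (k - 2) + (N - 2 * k + 2) + (k - 1)" by simp
  also have "\<dots> \<ge> N - 1" using assms(2,3) by linarith
  finally have len: "length ?r \<ge> N - 1" .
  have "j' < length ?r" using Suc assms len by simp
  hence "?r ! j' \<in> set ?r" by (rule nth_mem)
  hence "?r ! j' \<noteq> Hash" by (auto split: if_splits)
  then show ?thesis using Suc by (simp add: tau_def)
qed

lemma dvd_key: "N > (0::nat) \<Longrightarrow> N dvd (i + p) \<longleftrightarrow> p mod N = (N - i mod N) mod N"
proof -
  assume N: "N > 0"
  define a where "a = i mod N"
  define b where "b = p mod N"
  have ab: "a < N" "b < N" using N by (auto simp: a_def b_def)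
  have "N dvd (i + p) \<longleftrightarrow> (a + b) mod N = 0"
    by (simp add: a_def b_def dvd_eq_mod_eq_0 mod_add_eq)
  also have "\<dots> \<longleftrightarrow> a + b = 0 \<or> a + b = N"
  proof
    assume h: "(a + b) mod N = 0"
    show "a + b = 0 \<or> a + b = N"
    proof (cases "a + b < N")
      case True then show ?thesis using h by simp
    next
      case False
      hence "(a + b) mod N = a + b - N" using ab by (simp add: le_mod_geq)
      then show ?thesis using h ab False by simp
    qed
  qed auto
  also have "\<dots> \<longleftrightarrow> b = (N - a) mod N"
    using ab by (cases "a = 0") auto
  finally show ?thesis by (simp add: a_def b_def)
qed

lemma card_mult:
  assumes "N > 0"
  shows "card {p. p < N * m \<and> N dvd (i + p)} = m"
proof -
  define r0 where "r0 = (N - i mod N) mod N"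
  have r0: "r0 < N" using assms unfolding r0_def by simp
  have key: "N dvd (i + p) \<longleftrightarrow> p mod N = r0" for p
    unfolding r0_def using dvd_key[OF assms] .
  have "{p. p < N * m \<and> N dvd (i + p)} = (\<lambda>t. t * N + r0) ` {..<m}"
  proof (intro set_eqI iffI)
    fix p assume "p \<in> {p. p < N * m \<and> N dvd (i + p)}"
    hence p: "p < N * m" "p mod N = r0" using key by auto
    have "p = (p div N) * N + r0" using p(2) by (metis div_mult_mod_eq)
    moreover have "p div N < m" using p(1) assms
      by (simp add: less_mult_imp_div_less mult.commute)
    ultimately show "p \<in> (\<lambda>t. t * N + r0) ` {..<m}" by blast
  next
    fix p assume "p \<in> (\<lambda>t. t * N + r0) ` {..<m}"
    then obtain t where t: "t < m" "p = t * N + r0" by auto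
    have "p mod N = r0" using t r0 by simp
    moreover have "p < N * m"
    proof -
      have "t * N + r0 < t * N + N" using r0 by simp
      also have "\<dots> = (t + 1) * N" by simp
      also have "\<dots> \<le> m * N" using t by (intro mult_right_mono) auto
      finally show ?thesis using t by (simp add: mult.commute)
    qed
    ultimately show "p \<in> {p. p < N * m \<and> N dvd (i + p)}" using key by auto
  qed
  moreover have "inj_on (\<lambda>t. t * N + r0) {..<m}" using assms by (auto simp: inj_on_def)
  ultimately show ?thesis by (simp add: card_image)
qed

theorem lemma5:
  fixes k N e m :: nat and w :: "nat \<Rightarrow> bool" and v :: "sym list"
  assumes "k \<ge> 2" and "N \<ge> 2 * k - 1"
    and "k_abelian_power k e m v" and "e \<ge> N"
    and "occurs_in v (tau_word k N w)"
  shows "N dvd m"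
proof -
  have N0: "N > 0" using assms(1,2) by simp
  obtain us where us: "length us = e" "concat us = v" "length (us ! 0) = m"
    "\<forall>i<e. \<forall>j<e. k_abelian_eq k (us ! i) (us ! j)"
    using assms(3) unfolding k_abelian_power_def by blast
  obtain i where i: "\<forall>j<length v. v ! j = tau_word k N w (i + j)"
    using assms(5) unfolding occurs_in_def by blast
  define c where "c = cnt Hash (us ! 0)"
  have e0: "0 < e" using N0 assms(4) by simp
  have blk: "length (us ! j) = m \<and> cnt Hash (us ! j) = c" if "j < e" for j
    using kab_len[of k "us ! 0" "us ! j"] us(3,4) that e0 assms(1) c_def by auto
  have ind: "n \<le> e \<Longrightarrow> length (concat (take n us)) = n * m \<and> cnt Hash (concat (take n us)) = n * c" for n
  proof (induction n)
    case 0 then show ?case by (simp add: cnt_def)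
  next
    case (Suc n)
    hence "n < length us" using us(1) by simp
    hence "take (Suc n) us = take n us @ [us ! n]" by (simp add: take_Suc_conv_app_nth)
    then show ?case using Suc blk[of n] us(1) by (simp add: cnt_def)
  qed
  from ind[OF assms(4)] have L: "length (concat (take N us)) = N * m"
    and C: "cnt Hash (concat (take N us)) = N * c" by auto
  have "concat us = concat (take N us) @ concat (drop N us)"
    by (metis append_take_drop_id concat_append)
  hence pre: "concat (take N us) = take (N * m) v" using L us(2) by (metis append_eq_conv_conj)
  have lv: "N * m \<le> length v" using L us(2) pre by (metis length_take min.absorb_iff2 min_def)
  have "cnt Hash (take (N * m) v) = card {p. p < N * m \<and> Hash = take (N * m) v ! p}"
    unfolding cnt_def using lv by (simp add: length_filter_conv_card)
  also have seteq: "{p. p < N * m \<and> Hash = take (N * m) v ! p} = {p. p < N * m \<and> N dvd (i + p)}"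
  proof (intro set_eqI)
    fix p
    show "p \<in> {p. p < N * m \<and> Hash = take (N * m) v ! p} \<longleftrightarrow> p \<in> {p. p < N * m \<and> N dvd (i + p)}"
    proof (cases "p < N * m")
      case True
      hence "take (N * m) v ! p = tau k N (w ((i + p) div N)) ! ((i + p) mod N)"
        using i lv by (simp add: tau_word_def)
      moreover have "(tau k N (w ((i + p) div N)) ! ((i + p) mod N) = Hash) \<longleftrightarrow> (i + p) mod N = 0"
        using tau_hash[of "(i + p) mod N" N k] N0 assms(1,2) by simp
      ultimately show ?thesis using True by (auto simp: dvd_eq_mod_eq_0)
    qed simp
  qed
  also have "card {p. p < N * m \<and> N dvd (i + p)} = m" using card_mult[OF N0] .
  finally have "N * c = m" using C pre by simp
  then show ?thesis by (metis dvd_triv_left)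
qed

end
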